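(* Let $d\ge 2$ and $N\ge 2$ be integers, let $X=\{x^1,\dots,x^N\}\subseteq\mathbb{R}^d$, and let $C\subseteq\mathbb{R}^d$ be a proper closed convex cone which is pointed (i.e. $C\cap(-C)=\{0\}$) and polyhedral (i.e. an intersection of finitely many closed halfspaces). If $\bar x\in X$ satisfies $r_{X,C}(\bar x)=\max_{x\in X} r_{X,C}(x)$, then $\bar x$ is maximal in $X$ with respect to $\leq_C$. The converse is not true in general: there exist such $X$ and $C$ and an element of $X$ that is maximal in $X$ with respect to $\leq_C$ but does not maximize $r_{X,C}$ over $X$.
   Context: A proper closed convex cone $C\subseteq\mathbb{R}^d$ is a closed set with $sC=C$ for all $s\ge 0$, $C+C=C$, and $C\notin\{\varnothing,\mathbb{R}^d\}$; it induces the preorder $y\leq_C z$ iff $z-y\in C$. The dual cone is $C^+=\{v\in\mathbb{R}^d\mid \forall z\in C: v^\top z\ge 0\}$, and for $w\in\mathbb{R}^d$, $H^+(w)=\{z\in\mathbb{R}^d\mid w^\top z\ge 0\}$. The cone ranking function is $r_{X,C}(z)=\min_{w\in C^+}\#\{x\in X\mid w^\top x\le w^\top z\}$ for $z\in\mathbb{R}^d$ ($\#$ = cardinality). A point $\bar x\in X$ is maximal in $X$ with respect to $\leq_C$ if for every $x\in X$ with $\bar x\leq_C x$ one has $x\leq_C\bar x$. *)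

theory Defs
  imports "HOL-Analysis.Analysis"
begin

definition proper_closed_convex_cone :: "'a::euclidean_space set \<Rightarrow> bool" where
  "proper_closed_convex_cone C \<longleftrightarrow>
     closed C \<and> (\<forall>s\<ge>0. \<forall>z\<in>C. s *\<^sub>R z \<in> C) \<and> (\<forall>y\<in>C. \<forall>z\<in>C. y + z \<in> C)
     \<and> C \<noteq> {} \<and> C \<noteq> UNIV"

definition pointed_cone :: "'a::euclidean_space set \<Rightarrow> bool" where
  "pointed_cone C \<longleftrightarrow> C \<inter> uminus ` C = {0}"

definition cone_le :: "'a::euclidean_space set \<Rightarrow> 'a \<Rightarrow> 'a \<Rightarrow> bool" where
  "cone_le C y z \<longleftrightarrow> z - y \<in> C"

definition dual_cone :: "'a::euclidean_space set \<Rightarrow> 'a set" where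
  "dual_cone C = {v. \<forall>z\<in>C. v \<bullet> z \<ge> 0}"

definition cone_rank :: "'a::euclidean_space set \<Rightarrow> 'a set \<Rightarrow> 'a \<Rightarrow> nat" where
  "cone_rank X C z = Min ((\<lambda>w. card {x\<in>X. w \<bullet> x \<le> w \<bullet> z}) ` dual_cone C)"

definition cone_maximal :: "'a::euclidean_space set \<Rightarrow> 'a set \<Rightarrow> 'a \<Rightarrow> bool" where
  "cone_maximal X C xb \<longleftrightarrow> xb \<in> X \<and> (\<forall>x\<in>X. cone_le C xb x \<longrightarrow> cone_le C x xb)"

end

theory Submission
  imports Defs
begin

lemma zero_dual: "0 \<in> dual_cone C"
  by (simp add: dual_cone_def)

lemma rank_fin:
  assumes "finite X"
  shows "finite ((\<lambda>w. card {x\<in>X. w \<bullet> x \<le> w \<bullet> z}) ` D)"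
proof (rule finite_subset[of _ "{..card X}"])
  show "(\<lambda>w. card {x\<in>X. w \<bullet> x \<le> w \<bullet> z}) ` D \<subseteq> {..card X}"
    using assms by (auto intro: card_mono)
qed simp

lemma rank_le:
  assumes "finite X" "w \<in> dual_cone C"
  shows "cone_rank X C z \<le> card {x\<in>X. w \<bullet> x \<le> w \<bullet> z}"
  unfolding cone_rank_def using assms rank_fin[OF assms(1)] by (intro Min_le) auto

lemma rank_att:
  assumes "finite X"
  shows "\<exists>w\<in>dual_cone C. cone_rank X C z = card {x\<in>X. w \<bullet> x \<le> w \<bullet> z}"
proof -
  have "cone_rank X C z \<in> (\<lambda>w. card {x\<in>X. w \<bullet> x \<le> w \<bullet> z}) ` dual_cone C"
    unfolding cone_rank_def using rank_fin[OF assms] zero_dual by (intro Min_in) auto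
  then show ?thesis by auto
qed

lemma pcc_zero: "proper_closed_convex_cone C \<Longrightarrow> 0 \<in> C"
  unfolding proper_closed_convex_cone_def by (metis all_not_in_conv order_refl scaleR_zero_left)

lemma pcc_convex: "proper_closed_convex_cone C \<Longrightarrow> convex C"
  unfolding proper_closed_convex_cone_def convex_def by simp

lemma separate:
  assumes "proper_closed_convex_cone C" "z \<notin> C"
  shows "\<exists>v\<in>dual_cone C. v \<bullet> z < 0"
proof -
  have cl: "closed C" using assms(1) unfolding proper_closed_convex_cone_def by simp
  obtain a b where ab: "a \<bullet> z < b" "\<forall>x\<in>C. a \<bullet> x > b"
    using separating_hyperplane_closed_point[OF pcc_convex[OF assms(1)] cl assms(2)] by blast
  have b0: "b < 0" using ab(2) pcc_zero[OF assms(1)] by force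
  have "a \<in> dual_cone C"
    unfolding dual_cone_def
  proof (clarify, rule ccontr)
    fix x assume x: "x \<in> C" and neg: "\<not> 0 \<le> a \<bullet> x"
    define s where "s = b / (a \<bullet> x)"
    have s0: "s \<ge> 0" unfolding s_def using neg b0 by (simp add: divide_nonpos_neg)
    then have "s *\<^sub>R x \<in> C" using assms(1) x unfolding proper_closed_convex_cone_def by blast
    then have "a \<bullet> (s *\<^sub>R x) > b" using ab by blast
    moreover have "a \<bullet> (s *\<^sub>R x) = b" unfolding s_def using neg by simp
    ultimately show False by simp
  qed
  then show ?thesis using ab b0 by force
qed

lemma part1:
  assumes fin: "finite X" and C: "proper_closed_convex_cone C" and xb: "xb \<in> X"
    and mx: "cone_rank X C xb = Max (cone_rank X C ` X)"
  shows "cone_maximal X C xb"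
proof (rule ccontr)
  assume "\<not> cone_maximal X C xb"
  then obtain x where x: "x \<in> X" "x - xb \<in> C" "xb - x \<notin> C"
    using xb unfolding cone_maximal_def cone_le_def by blast
  obtain v where v: "v \<in> dual_cone C" "v \<bullet> (xb - x) < 0" using separate[OF C x(3)] by blast
  obtain w0 where w0: "w0 \<in> dual_cone C" "cone_rank X C x = card {y\<in>X. w0 \<bullet> y \<le> w0 \<bullet> x}"
    using rank_att[OF fin] by blast
  have ev: "\<forall>y\<in>X. eventually (\<lambda>t::real. w0 \<bullet> y > w0 \<bullet> x \<longrightarrow> t * (w0 \<bullet> (y - x)) + v \<bullet> (y - x) > 0) at_top"
  proof
    fix y assume "y \<in> X"
    show "eventually (\<lambda>t::real. w0 \<bullet> y > w0 \<bullet> x \<longrightarrow> t * (w0 \<bullet> (y - x)) + v \<bullet> (y - x) > 0) at_top"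
      using eventually_gt_at_top[of "- (v \<bullet> (y - x)) / (w0 \<bullet> (y - x))"]
    proof eventually_elim
      case (elim t)
      show ?case
      proof
        assume "w0 \<bullet> y > w0 \<bullet> x"
        then have p: "w0 \<bullet> (y - x) > 0" by (simp add: inner_diff_right)
        have "(- (v \<bullet> (y - x))) / (w0 \<bullet> (y - x)) < t" using elim by simp
        then have "t * (w0 \<bullet> (y - x)) > - (v \<bullet> (y - x))"
          using pos_divide_less_eq[OF p] by (metis mult.commute)
        then show "t * (w0 \<bullet> (y - x)) + v \<bullet> (y - x) > 0" by simp
      qed
    qed
  qed
  obtain t where t: "t > 0" "\<forall>y\<in>X. w0 \<bullet> y > w0 \<bullet> x \<longrightarrow> t * (w0 \<bullet> (y - x)) + v \<bullet> (y - x) > 0"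
  proof -
    have "eventually (\<lambda>t::real. t > 0 \<and> (\<forall>y\<in>X. w0 \<bullet> y > w0 \<bullet> x \<longrightarrow> t * (w0 \<bullet> (y - x)) + v \<bullet> (y - x) > 0)) at_top"
      using eventually_conj[OF eventually_gt_at_top[of 0] eventually_ball_finite[OF fin ev]] by simp
    then obtain N where "\<forall>n\<ge>N. n > 0 \<and> (\<forall>y\<in>X. w0 \<bullet> y > w0 \<bullet> x \<longrightarrow> n * (w0 \<bullet> (y - x)) + v \<bullet> (y - x) > 0)"
      unfolding eventually_at_top_linorder by blast
    then show ?thesis using that by blast
  qed
  define w where "w = t *\<^sub>R w0 + v"
  have wd: "w \<in> dual_cone C" using w0(1) v(1) t(1) unfolding w_def dual_cone_def
    by (auto simp: inner_add_left intro!: add_nonneg_nonneg)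
  have sub1: "{y\<in>X. w \<bullet> y \<le> w \<bullet> x} \<subseteq> {y\<in>X. w0 \<bullet> y \<le> w0 \<bullet> x}"
  proof clarify
    fix y assume y: "y \<in> X" "w \<bullet> y \<le> w \<bullet> x"
    show "w0 \<bullet> y \<le> w0 \<bullet> x"
    proof (rule ccontr)
      assume "\<not> w0 \<bullet> y \<le> w0 \<bullet> x"
      then have "t * (w0 \<bullet> (y - x)) + v \<bullet> (y - x) > 0" using t y by auto
      moreover have "w \<bullet> y - w \<bullet> x = t * (w0 \<bullet> (y - x)) + v \<bullet> (y - x)"
        unfolding w_def by (simp add: inner_add_left inner_diff_right algebra_simps)
      ultimately show False using y by simp
    qed
  qed
  have c0: "w0 \<bullet> (x - xb) \<ge> 0" using w0(1) x(2) unfolding dual_cone_def by blast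
  have lt: "w \<bullet> xb < w \<bullet> x"
  proof -
    have "w \<bullet> x - w \<bullet> xb = t * (w0 \<bullet> (x - xb)) + v \<bullet> (x - xb)"
      unfolding w_def by (simp add: inner_add_left inner_diff_right algebra_simps)
    moreover have "v \<bullet> (x - xb) > 0" using v(2) by (simp add: inner_diff_right)
    moreover have "t * (w0 \<bullet> (x - xb)) \<ge> 0" using t(1) c0 by simp
    ultimately show ?thesis by linarith
  qed
  have sub2: "{y\<in>X. w \<bullet> y \<le> w \<bullet> xb} \<subset> {y\<in>X. w \<bullet> y \<le> w \<bullet> x}"
  proof -
    have "{y\<in>X. w \<bullet> y \<le> w \<bullet> xb} \<subseteq> {y\<in>X. w \<bullet> y \<le> w \<bullet> x}" using lt by auto
    moreover have "x \<in> {y\<in>X. w \<bullet> y \<le> w \<bullet> x}" "x \<notin> {y\<in>X. w \<bullet> y \<le> w \<bullet> xb}" using lt x(1) by auto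
    ultimately show ?thesis by blast
  qed
  have "cone_rank X C xb < cone_rank X C x"
  proof -
    have "cone_rank X C xb \<le> card {y\<in>X. w \<bullet> y \<le> w \<bullet> xb}" using rank_le[OF fin wd] .
    also have "\<dots> < card {y\<in>X. w \<bullet> y \<le> w \<bullet> x}" using sub2 fin by (intro psubset_card_mono) auto
    also have "\<dots> \<le> card {y\<in>X. w0 \<bullet> y \<le> w0 \<bullet> x}" using sub1 fin by (intro card_mono) auto
    finally show ?thesis using w0(2) by simp
  qed
  moreover have "cone_rank X C x \<le> Max (cone_rank X C ` X)" using fin x(1) by simp
  ultimately show False using mx by simp
qed


lemma part2:
  assumes "DIM('a::euclidean_space) \<ge> 2"
  shows "\<exists>(X::'a set) C xb.
            finite X \<and> card X \<ge> 2 \<and> proper_closed_convex_cone C \<and> pointed_cone C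
            \<and> polyhedron C \<and> xb \<in> X \<and> cone_maximal X C xb
            \<and> cone_rank X C xb \<noteq> Max (cone_rank X C ` X)"
proof -
  obtain S where S: "S \<subseteq> (Basis::'a set)" "card S = 2" "finite S"
    by (rule obtain_subset_with_card_n[OF assms])
  then obtain e1 e2 :: 'a where e: "e1 \<in> Basis" "e2 \<in> Basis" "e1 \<noteq> e2"
    unfolding card_2_iff by blast
  have i11: "e1 \<bullet> e1 = 1" and i22: "e2 \<bullet> e2 = 1" and i12: "e1 \<bullet> e2 = 0" and i21: "e2 \<bullet> e1 = 0"
    using e by (auto simp: inner_Basis)
  define C :: "'a set" where "C = {z. \<forall>b\<in>Basis. 0 \<le> b \<bullet> z}"
  define a :: 'a where "a = 2 *\<^sub>R e1"
  define b :: 'a where "b = 2 *\<^sub>R e2"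
  define c :: 'a where "c = e1 + e2"
  define X where "X = {a, b, c}"
  have ia: "e1 \<bullet> a = 2" "e2 \<bullet> a = 0" using i11 i21 by (simp_all add: a_def)
  have ib: "e1 \<bullet> b = 0" "e2 \<bullet> b = 2" using i12 i22 by (simp_all add: b_def)
  have ic: "e1 \<bullet> c = 1" "e2 \<bullet> c = 1" using i11 i12 i21 i22 by (simp_all add: c_def inner_add_right)
  have dist: "a \<noteq> b" "a \<noteq> c" "b \<noteq> c" using ia ib ic by auto
  have finX: "finite X" unfolding X_def by simp
  have cardX: "card X = 3" unfolding X_def using dist by simp
  have polyC: "polyhedron C"
  proof -
    have "C = \<Inter> ((\<lambda>b. {z. b \<bullet> z \<ge> 0}) ` Basis)" unfolding C_def by auto
    moreover have "polyhedron (\<Inter> ((\<lambda>b. {z. b \<bullet> z \<ge> (0::real)}) ` (Basis::'a set)))"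
      by (rule polyhedron_Inter) (auto intro: polyhedron_halfspace_ge)
    ultimately show ?thesis by simp
  qed
  have e1C: "e1 \<in> C" "e2 \<in> C" unfolding C_def using e by (auto simp: inner_Basis)
  have nC: "- e1 \<notin> C" unfolding C_def using e i11 by force
  have pcc: "proper_closed_convex_cone C"
    unfolding proper_closed_convex_cone_def
  proof (intro conjI)
    show "closed C" by (rule polyhedron_imp_closed[OF polyC])
    show "\<forall>s\<ge>0. \<forall>z\<in>C. s *\<^sub>R z \<in> C" unfolding C_def by simp
    show "\<forall>y\<in>C. \<forall>z\<in>C. y + z \<in> C" unfolding C_def by (simp add: inner_add_right)
    show "C \<noteq> {}" using e1C by blast
    show "C \<noteq> UNIV" using nC by blast
  qed
  have pointed: "pointed_cone C"
    unfolding pointed_cone_def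
  proof
    show "C \<inter> uminus ` C \<subseteq> {0}"
    proof clarify
      fix u assume u: "- u \<in> C" "u \<in> C"
      have "\<forall>bb\<in>Basis. u \<bullet> bb = 0 \<bullet> bb"
      proof
        fix bb :: 'a assume "bb \<in> Basis"
        then have "0 \<le> bb \<bullet> u" "0 \<le> bb \<bullet> (-u)" using u unfolding C_def by auto
        then show "u \<bullet> bb = 0 \<bullet> bb" by (simp add: inner_commute)
      qed
      then show "-u = 0" using euclidean_eq_iff by (metis neg_equal_0_iff_equal)
    qed
    show "{0} \<subseteq> C \<inter> uminus ` C" unfolding C_def by force
  qed
  have dual: "w \<in> dual_cone C \<Longrightarrow> 0 \<le> w \<bullet> e1 \<and> 0 \<le> w \<bullet> e2" for w
    using e1C unfolding dual_cone_def by blast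
  have e2d: "e2 \<in> dual_cone C" unfolding dual_cone_def C_def using e(2) by auto
  have maxa: "cone_maximal X C a"
    unfolding cone_maximal_def cone_le_def
  proof (intro conjI ballI impI)
    show "a \<in> X" unfolding X_def by simp
    fix x assume x: "x \<in> X" "x - a \<in> C"
    have "0 \<le> e1 \<bullet> (x - a)" using x(2) e(1) unfolding C_def by blast
    then have "x = a" using x(1) ia ib ic unfolding X_def by (auto simp: inner_diff_right)
    then show "a - x \<in> C" using pcc_zero[OF pcc] by simp
  qed
  have ra: "cone_rank X C a \<le> 1"
  proof -
    have "{x\<in>X. e2 \<bullet> x \<le> e2 \<bullet> a} = {a}" unfolding X_def using ia ib ic by auto
    then show ?thesis using rank_le[OF finX e2d, of a] by simp
  qed
  have rc: "cone_rank X C c \<ge> 2"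
  proof -
    obtain w where w: "w \<in> dual_cone C" "cone_rank X C c = card {x\<in>X. w \<bullet> x \<le> w \<bullet> c}"
      using rank_att[OF finX] by blast
    have wa: "w \<bullet> a = 2 * (w \<bullet> e1)" "w \<bullet> b = 2 * (w \<bullet> e2)" "w \<bullet> c = w \<bullet> e1 + w \<bullet> e2"
      by (simp_all add: a_def b_def c_def inner_add_right)
    have "{a, c} \<subseteq> {x\<in>X. w \<bullet> x \<le> w \<bullet> c} \<or> {b, c} \<subseteq> {x\<in>X. w \<bullet> x \<le> w \<bullet> c}"
      unfolding X_def using wa by auto
    moreover have "card {a, c} = 2" "card {b, c} = 2" using dist by auto
    moreover have "finite {x\<in>X. w \<bullet> x \<le> w \<bullet> c}" using finX by simp
    ultimately have "2 \<le> card {x\<in>X. w \<bullet> x \<le> w \<bullet> c}"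
      using card_mono[of "{x\<in>X. w \<bullet> x \<le> w \<bullet> c}" "{a, c}"] card_mono[of "{x\<in>X. w \<bullet> x \<le> w \<bullet> c}" "{b, c}"]
      by fastforce
    then show ?thesis using w(2) by simp
  qed
  have "cone_rank X C c \<le> Max (cone_rank X C ` X)" using finX unfolding X_def by simp
  then have "cone_rank X C a \<noteq> Max (cone_rank X C ` X)" using ra rc by linarith
  moreover have "a \<in> X" unfolding X_def by simp
  ultimately show ?thesis using finX cardX pcc pointed polyC maxa by (intro exI[of _ X] exI[of _ C] exI[of _ a]) simp
qed

theorem theorem2p3:
  assumes "DIM('a::euclidean_space) \<ge> 2"
  shows "(\<forall>(X::'a set) C xb.
            finite X \<and> card X \<ge> 2 \<and> proper_closed_convex_cone C \<and> pointed_cone C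
            \<and> polyhedron C \<and> xb \<in> X \<and> cone_rank X C xb = Max (cone_rank X C ` X)
            \<longrightarrow> cone_maximal X C xb)
       \<and> (\<exists>(X::'a set) C xb.
            finite X \<and> card X \<ge> 2 \<and> proper_closed_convex_cone C \<and> pointed_cone C
            \<and> polyhedron C \<and> xb \<in> X \<and> cone_maximal X C xb
            \<and> cone_rank X C xb \<noteq> Max (cone_rank X C ` X))"
  using part1 part2[OF assms] by blast

end
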